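(* Let $r\ge1$ and let $\tau,\tau'$ be permutations of $F^r$ fixing $\mathbf 0$. For a permutation $\pi$ of the $2^{r+1}$ coordinate positions of $F^{2^{r+1}}$, we have $SQS_\tau\sim_\pi SQS_{\tau'}$ if and only if $\pi(S_\tau)=S_{\tau'}$.
   Context: $F=\mathrm{GF}(2)$, $\mathbf 0$ is the all-zero vector. Index the coordinates of $F^{2^r}$ by the vectors of $F^r$; $e_a$ is the unit vector with a single $1$ at position $a$. The extended Hamming code is $\mathcal H=\{x\in F^{2^r}:\sum_{a:x_a=1}a=\mathbf 0,\ \mathrm{wt}(x)\text{ even}\}$. For $x,y\in F^{2^r}$, $x|y\in F^{2^{r+1}}$ is the concatenation and $C\times D=\{x|y:x\in C,y\in D\}$. Define $S_\tau=\bigcup_{a\in F^r}(\mathcal H+e_a+e_{\mathbf 0})\times(\mathcal H+e_{\tau(a)}+e_{\tau(\mathbf 0)})$, an extended perfect code of length $2^{r+1}$ containing the zero vector. The coordinate positions of $F^{2^{r+1}}$ are denoted $(\{a\},\emptyset)$ (position $a$ in the first half) and $(\emptyset,\{a\})$ (position $a$ in the second half), and the support of $x|y$ is written $(\mathrm{supp}(x),\mathrm{supp}(y))$. $SQS_\tau$ is the Steiner quadruple system on these positions consisting of $Q_0=\{(\{a,b,c,d\},\emptyset): a,b,c,d \text{ pairwise distinct}, a+b+c+d=\mathbf 0\}$, $Q_1=\{(\emptyset,\{a,b,c,d\}): a,b,c,d \text{ pairwise distinct}, a+b+c+d=\mathbf 0\}$ and $Q_\tau=\{(\{a,c\},\{b,d\}):\tau(a+c)=b+d\neq\mathbf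 0\}$ (these are the supports of the weight-4 codewords of $S_\tau$). Permutations act on vectors by $\pi(y)_i=y_{\pi^{-1}(i)}$. $SQS_\tau\sim_\pi SQS_{\tau'}$ means $\pi$ maps the set of quadruples of $SQS_\tau$ onto that of $SQS_{\tau'}$. *)

theory Defs
  imports Main
begin

text \<open>A vector of F^r (F = GF(2)) is represented by its support, a subset of
  {0..<r}; vector addition is symmetric difference and the zero vector is the empty set.
  A binary word of length 2^r whose coordinates are indexed by F^r is represented by its
  support, a subset of F^r. Coordinate positions of F^(2^(r+1)) are pairs (False, a)
  (position a in the first half) and (True, a) (position a in the second half).\<close>

definition vecs :: "nat \<Rightarrow> nat set set" where
  "vecs r = Pow {..<r}"

definition vadd :: "nat set \<Rightarrow> nat set \<Rightarrow> nat set" where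
  "vadd a b = (a - b) \<union> (b - a)"

definition vsum :: "nat set set \<Rightarrow> nat set" where
  "vsum X = {i. odd (card {a \<in> X. i \<in> a})}"

text \<open>Words: supports. Adding a word to another word = symmetric difference of supports;
  the unit vector e_a has support {a}.\<close>
definition wadd :: "'a set \<Rightarrow> 'a set \<Rightarrow> 'a set" where
  "wadd x y = (x - y) \<union> (y - x)"

definition hamming :: "nat \<Rightarrow> nat set set set" where
  "hamming r = {x. x \<subseteq> vecs r \<and> vsum x = {} \<and> even (card x)}"

definition hcoset :: "nat \<Rightarrow> nat set \<Rightarrow> nat set set set" where
  "hcoset r a = (\<lambda>x. wadd (wadd x {a}) {{}}) ` hamming r"

definition concat_w :: "nat set set \<Rightarrow> nat set set \<Rightarrow> (bool \<times> nat set) set" where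
  "concat_w x y = Pair False ` x \<union> Pair True ` y"

definition positions :: "nat \<Rightarrow> (bool \<times> nat set) set" where
  "positions r = UNIV \<times> vecs r"

definition S_code :: "nat \<Rightarrow> (nat set \<Rightarrow> nat set) \<Rightarrow> (bool \<times> nat set) set set" where
  "S_code r \<tau> = (\<Union>a\<in>vecs r. {concat_w x y | x y. x \<in> hcoset r a \<and> y \<in> hcoset r (\<tau> a)})"

definition Q0 :: "nat \<Rightarrow> (bool \<times> nat set) set set" where
  "Q0 r = {Pair False ` {a, b, c, d} | a b c d. a \<in> vecs r \<and> b \<in> vecs r \<and> c \<in> vecs r \<and> d \<in> vecs r
     \<and> distinct [a, b, c, d] \<and> vadd (vadd a b) (vadd c d) = {}}"

definition Q1 :: "nat \<Rightarrow> (bool \<times> nat set) set set" where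
  "Q1 r = {Pair True ` {a, b, c, d} | a b c d. a \<in> vecs r \<and> b \<in> vecs r \<and> c \<in> vecs r \<and> d \<in> vecs r
     \<and> distinct [a, b, c, d] \<and> vadd (vadd a b) (vadd c d) = {}}"

definition Qtau :: "nat \<Rightarrow> (nat set \<Rightarrow> nat set) \<Rightarrow> (bool \<times> nat set) set set" where
  "Qtau r \<tau> = {Pair False ` {a, c} \<union> Pair True ` {b, d} | a b c d.
     a \<in> vecs r \<and> b \<in> vecs r \<and> c \<in> vecs r \<and> d \<in> vecs r
     \<and> \<tau> (vadd a c) = vadd b d \<and> vadd b d \<noteq> {}}"

definition SQS :: "nat \<Rightarrow> (nat set \<Rightarrow> nat set) \<Rightarrow> (bool \<times> nat set) set set" where
  "SQS r \<tau> = Q0 r \<union> Q1 r \<union> Qtau r \<tau>"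

end

theory Submission
  imports Defs
begin
lemma vadd_comm: "vadd a b = vadd b a" by (auto simp: vadd_def)
lemma vadd_assoc: "vadd (vadd a b) c = vadd a (vadd b c)" by (auto simp: vadd_def)
lemma vadd_left_comm: "vadd a (vadd b c) = vadd b (vadd a c)" by (auto simp: vadd_def)
lemma vadd_self[simp]: "vadd a a = {}" by (auto simp: vadd_def)
lemma vadd_self2[simp]: "vadd a (vadd a b) = b" by (auto simp: vadd_def)
lemma vadd_empty[simp]: "vadd a {} = a" "vadd {} a = a" by (auto simp: vadd_def)
lemma vadd_eq_empty[simp]: "vadd a b = {} \<longleftrightarrow> a = b" by (auto simp: vadd_def)
lemma vadd_cancel[simp]: "vadd a b = vadd a c \<longleftrightarrow> b = c" by (auto simp: vadd_def)
lemma vadd_cancel2[simp]: "vadd b a = vadd c a \<longleftrightarrow> b = c" by (auto simp: vadd_def)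
lemma vadd_eq_iff: "vadd a b = c \<longleftrightarrow> b = vadd a c" by (auto simp: vadd_def)

lemma vecs_iff: "a \<in> vecs r \<longleftrightarrow> a \<subseteq> {..<r}" by (simp add: vecs_def)
lemma vadd_vecs[simp]: "a \<in> vecs r \<Longrightarrow> b \<in> vecs r \<Longrightarrow> vadd a b \<in> vecs r"
  by (auto simp: vecs_def vadd_def)
lemma empty_vecs[simp]: "{} \<in> vecs r" by (simp add: vecs_def)
lemma finite_vecs[simp]: "finite (vecs r)" by (simp add: vecs_def)
lemma card_vecs: "card (vecs r) = 2 ^ r" by (simp add: vecs_def card_Pow)

lemma wadd_comm: "wadd a b = wadd b a" by (auto simp: wadd_def)
lemma wadd_assoc: "wadd (wadd a b) c = wadd a (wadd b c)" by (auto simp: wadd_def)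
lemma wadd_self[simp]: "wadd a a = {}" by (auto simp: wadd_def)
lemma wadd_empty[simp]: "wadd a {} = a" "wadd {} a = a" by (auto simp: wadd_def)
lemma wadd_self2[simp]: "wadd (wadd a b) b = a" by (auto simp: wadd_def)

lemma card_wadd:
  assumes "finite A" "finite B"
  shows "card (wadd A B) + 2 * card (A \<inter> B) = card A + card B"
proof -
  have "card (wadd A B) = card (A - B) + card (B - A)"
    unfolding wadd_def by (rule card_Un_disjoint) (use assms in auto)
  moreover have "card (A - B) + card (A \<inter> B) = card A"
    using assms by (metis card_Diff_subset_Int card_mono inf_le1 le_add_diff_inverse2 finite_Int Int_lower1 card_Int_Diff Int_commute add.commute)
  moreover have "card (B - A) + card (A \<inter> B) = card B"
    using assms by (metis Int_commute add.commute card_Int_Diff)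
  ultimately show ?thesis by linarith
qed

lemma even_card_wadd:
  assumes "finite A" "finite B"
  shows "even (card (wadd A B)) \<longleftrightarrow> (even (card A) \<longleftrightarrow> even (card B))"
  using card_wadd[OF assms] by (metis even_add even_mult_iff even_numeral)

lemma vsum_wadd:
  assumes "finite X" "finite Y"
  shows "vsum (wadd X Y) = vadd (vsum X) (vsum Y)"
proof -
  have "\<And>i. {a \<in> wadd X Y. i \<in> a} = wadd {a \<in> X. i \<in> a} {a \<in> Y. i \<in> a}"
    by (auto simp: wadd_def)
  then show ?thesis using assms
    by (auto simp: vsum_def vadd_def even_card_wadd)
qed

lemma vsum_empty[simp]: "vsum {} = {}" by (simp add: vsum_def)
lemma vsum_single[simp]: "vsum {a} = a"
proof -
  have "\<And>i. {b \<in> {a}. i \<in> b} = (if i \<in> a then {a} else {})" by auto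
  then show ?thesis by (auto simp: vsum_def)
qed
lemma vsum_insert: "finite X \<Longrightarrow> a \<notin> X \<Longrightarrow> vsum (insert a X) = vadd a (vsum X)"
proof -
  assume f: "finite X" and n: "a \<notin> X"
  have "insert a X = wadd {a} X" using n by (auto simp: wadd_def)
  then show ?thesis using f vsum_wadd[of "{a}" X] by simp
qed
lemma vsum_vecs:
  assumes "X \<subseteq> vecs r" shows "vsum X \<in> vecs r"
proof -
  have "\<And>i. i \<ge> r \<Longrightarrow> {a \<in> X. i \<in> a} = {}" proof -
    fix i assume i: "i \<ge> r"
    { fix a assume "a \<in> X" "i \<in> a"
      then have "a \<subseteq> {..<r}" using assms by (auto simp: vecs_def)
      with \<open>i \<in> a\<close> i have False by auto }
    then show "{a \<in> X. i \<in> a} = {}" by blast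
  qed
  then have "\<And>i. i \<in> vsum X \<Longrightarrow> i < r" unfolding vsum_def by (metis (no_types, lifting) card.empty even_zero mem_Collect_eq not_less)
  then show ?thesis by (auto simp: vecs_def)
qed

definition part :: "bool \<Rightarrow> (bool \<times> nat set) set \<Rightarrow> nat set set" where
  "part h z = {a. (h, a) \<in> z}"

definition inS :: "nat \<Rightarrow> (nat set \<Rightarrow> nat set) \<Rightarrow> (bool \<times> nat set) set \<Rightarrow> bool" where
  "inS r \<tau> z \<longleftrightarrow> z \<subseteq> positions r \<and> even (card (part False z)) \<and> even (card (part True z))
     \<and> \<tau> (vsum (part False z)) = vsum (part True z)"

lemma positions_iff[simp]: "(h, a) \<in> positions r \<longleftrightarrow> a \<in> vecs r"
  by (simp add: positions_def)

lemma finite_positions[simp]: "finite (positions r)"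
  by (simp add: positions_def)

lemma card_positions: "card (positions r) = 2 * 2 ^ r"
  by (simp add: positions_def card_cartesian_product card_vecs)

lemma part_vecs: "z \<subseteq> positions r \<Longrightarrow> part h z \<subseteq> vecs r"
  by (auto simp: part_def)

lemma finite_part: "z \<subseteq> positions r \<Longrightarrow> finite (part h z)"
  using part_vecs finite_vecs finite_subset by metis

lemma z_decomp: "z = Pair False ` part False z \<union> Pair True ` part True z"
proof -
  have "\<And>h a. (h, a) \<in> z \<longleftrightarrow> (h, a) \<in> Pair False ` part False z \<union> Pair True ` part True z"
    by (case_tac h) (auto simp: part_def)
  then show ?thesis by auto
qed

lemma card_decomp:
  assumes "finite z"
  shows "card z = card (part False z) + card (part True z)"
proof -
  have f: "finite (part h z)" for h
  proof -
    have "part h z \<subseteq> snd ` z" by (force simp: part_def)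
    then show ?thesis using assms finite_surj by blast
  qed
  have "card z = card (Pair False ` part False z \<union> Pair True ` part True z)"
    using z_decomp by metis
  also have "\<dots> = card (Pair False ` part False z) + card (Pair True ` part True z)"
    by (rule card_Un_disjoint) (use f in auto)
  also have "\<dots> = card (part False z) + card (part True z)"
    by (simp add: card_image inj_on_def)
  finally show ?thesis .
qed

lemma part_wadd[simp]: "part h (wadd z w) = wadd (part h z) (part h w)"
  by (auto simp: part_def wadd_def)

lemma part_Pair[simp]: "part h (Pair h' ` X) = (if h = h' then X else {})"
  by (auto simp: part_def)

lemma part_Un[simp]: "part h (A \<union> B) = part h A \<union> part h B"
  by (auto simp: part_def)

lemma part_insert[simp]: "part h (insert (h', a) X) = (if h = h' then insert a (part h X) else part h X)"
  by (auto simp: part_def)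

lemma part_empty[simp]: "part h {} = {}"
  by (auto simp: part_def)

lemma part_concat[simp]: "part False (concat_w x y) = x" "part True (concat_w x y) = y"
  by (auto simp: concat_w_def part_def)

lemma card_4_iff: "card X = 4 \<longleftrightarrow> (\<exists>a b c d. X = {a, b, c, d} \<and> distinct [a, b, c, d])"
proof
  assume "card X = 4"
  then have "card X = Suc 3" by simp
  then obtain a A where X: "X = insert a A" "a \<notin> A" "card A = 3"
    by (auto simp only: card_Suc_eq)
  then obtain b c d where "A = {b, c, d}" "b \<noteq> c" "c \<noteq> d" "b \<noteq> d"
    using card_3_iff[of A] by auto
  then have "X = {a, b, c, d} \<and> distinct [a, b, c, d]" using X by auto
  then show "\<exists>a b c d. X = {a, b, c, d} \<and> distinct [a, b, c, d]" by blast
next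
  assume "\<exists>a b c d. X = {a, b, c, d} \<and> distinct [a, b, c, d]"
  then show "card X = 4" by auto
qed

lemma wadd4: "wadd (wadd (wadd (wadd x A) B) A) B = x"
  by (auto simp: wadd_def)

lemma finite_wadd[simp]: "finite A \<Longrightarrow> finite B \<Longrightarrow> finite (wadd A B)"
  by (simp add: wadd_def)

lemma hcoset_iff:
  assumes a: "a \<in> vecs r"
  shows "x \<in> hcoset r a \<longleftrightarrow> x \<subseteq> vecs r \<and> even (card x) \<and> vsum x = a"
proof
  assume "x \<in> hcoset r a"
  then obtain x0 where x0h: "x0 \<in> hamming r" and x: "x = wadd (wadd x0 {a}) {{}}"
    using imageE[of x "\<lambda>x. wadd (wadd x {a}) {{}}" "hamming r"] unfolding hcoset_def by metis
  have x0: "x0 \<subseteq> vecs r" "vsum x0 = {}" "even (card x0)"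
    using x0h unfolding hamming_def by auto
  have f0: "finite x0" using x0(1) finite_subset finite_vecs by blast
  have "x \<subseteq> vecs r" using x0(1) a unfolding x wadd_def by auto
  moreover have "even (card x)" unfolding x using x0 f0
    by (simp add: even_card_wadd)
  moreover have "vsum x = a" unfolding x using x0 f0 by (simp add: vsum_wadd)
  ultimately show "x \<subseteq> vecs r \<and> even (card x) \<and> vsum x = a" by blast
next
  assume h: "x \<subseteq> vecs r \<and> even (card x) \<and> vsum x = a"
  define x0 where "x0 = wadd (wadd x {a}) {{}}"
  have f: "finite x" using h finite_subset finite_vecs by blast
  have "x0 \<subseteq> vecs r" using h a unfolding x0_def wadd_def by auto
  moreover have "even (card x0)" unfolding x0_def
    using h f by (simp add: even_card_wadd)
  moreover have "vsum x0 = {}" unfolding x0_def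
    using h f by (simp add: vsum_wadd)
  ultimately have x0h: "x0 \<in> hamming r" unfolding hamming_def by blast
  have "x = wadd (wadd x0 {a}) {{}}" unfolding x0_def by (rule wadd4[symmetric])
  then show "x \<in> hcoset r a" unfolding hcoset_def using x0h by (rule image_eqI)
qed

lemma S_code_iff:
  assumes "bij_betw \<tau> (vecs r) (vecs r)"
  shows "z \<in> S_code r \<tau> \<longleftrightarrow> inS r \<tau> z"
proof
  assume "z \<in> S_code r \<tau>"
  then obtain a x y where a: "a \<in> vecs r" and x: "x \<in> hcoset r a" and y: "y \<in> hcoset r (\<tau> a)"
    and z: "z = concat_w x y"
    by (auto simp: S_code_def)
  have ta: "\<tau> a \<in> vecs r" using a assms bij_betwE by blast
  have x': "x \<subseteq> vecs r" "even (card x)" "vsum x = a" using hcoset_iff[OF a, of x] x by auto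
  have y': "y \<subseteq> vecs r" "even (card y)" "vsum y = \<tau> a" using hcoset_iff[OF ta, of y] y by auto
  have "z \<subseteq> positions r" using x'(1) y'(1) unfolding z concat_w_def by auto
  then show "inS r \<tau> z" unfolding inS_def using x' y' z by simp
next
  assume h: "inS r \<tau> z"
  let ?x = "part False z" and ?y = "part True z"
  have zp: "z \<subseteq> positions r" using h by (simp add: inS_def)
  have a: "vsum ?x \<in> vecs r" using part_vecs[OF zp] vsum_vecs by blast
  have ta: "\<tau> (vsum ?x) \<in> vecs r" using a assms by (simp add: bij_betwE)
  have "?x \<in> hcoset r (vsum ?x)" using hcoset_iff[OF a] h part_vecs[OF zp] by (simp add: inS_def)
  moreover have "?y \<in> hcoset r (\<tau> (vsum ?x))"
    unfolding hcoset_iff[OF ta] using h part_vecs[OF zp] by (simp add: inS_def)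
  moreover have "z = concat_w ?x ?y" unfolding concat_w_def by (rule z_decomp)
  ultimately show "z \<in> S_code r \<tau>" using a unfolding S_code_def
    by (intro UN_I[of "vsum ?x"]) blast+
qed

locale tauloc =
  fixes r :: nat and \<tau> :: "nat set \<Rightarrow> nat set"
  assumes bij: "bij_betw \<tau> (vecs r) (vecs r)" and t0: "\<tau> {} = {}"
begin

lemma tau_vecs[simp]: "a \<in> vecs r \<Longrightarrow> \<tau> a \<in> vecs r"
  using bij bij_betwE by blast

lemma tau_inj: "a \<in> vecs r \<Longrightarrow> b \<in> vecs r \<Longrightarrow> \<tau> a = \<tau> b \<longleftrightarrow> a = b"
  using bij unfolding bij_betw_def inj_on_def by blast

lemma tau_zero: "a \<in> vecs r \<Longrightarrow> \<tau> a = {} \<longleftrightarrow> a = {}"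
  using tau_inj[of a "{}"] t0 by simp

end

lemma vsum2: "a \<noteq> b \<Longrightarrow> vsum {a, b} = vadd a b"
  by (simp add: vsum_insert)

lemma vsum4: "distinct [a, b, c, d] \<Longrightarrow> vsum {a, b, c, d} = vadd (vadd a b) (vadd c d)"
  by (simp add: vsum_insert vadd_assoc)

lemma card_img_Pair: "card (Pair h ` X) = card X"
  by (simp add: card_image inj_on_def)

context tauloc begin

lemma SQS_iff: "z \<in> SQS r \<tau> \<longleftrightarrow> inS r \<tau> z \<and> card z = 4"
proof
  assume "z \<in> SQS r \<tau>"
  then consider (q0) "z \<in> Q0 r" | (q1) "z \<in> Q1 r" | (qt) "z \<in> Qtau r \<tau>"
    unfolding SQS_def by blast
  then show "inS r \<tau> z \<and> card z = 4"
  proof cases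
    case q0
    then obtain a b c d where z: "z = Pair False ` {a, b, c, d}" and v: "a \<in> vecs r" "b \<in> vecs r" "c \<in> vecs r" "d \<in> vecs r"
      and dd: "distinct [a, b, c, d]" and s: "vadd (vadd a b) (vadd c d) = {}"
      unfolding Q0_def by blast
    have c4: "card {a, b, c, d} = 4" using dd by simp
    have px: "part False z = {a, b, c, d}" "part True z = {}" unfolding z by (simp_all only: part_Pair) simp_all
    have cz: "card z = 4" unfolding z card_img_Pair by (rule c4)
    have zp: "z \<subseteq> positions r" using v unfolding z by auto
    show ?thesis unfolding inS_def using zp px cz c4 s vsum4[OF dd] t0 by simp
  next
    case q1
    then obtain a b c d where z: "z = Pair True ` {a, b, c, d}" and v: "a \<in> vecs r" "b \<in> vecs r" "c \<in> vecs r" "d \<in> vecs r"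
      and dd: "distinct [a, b, c, d]" and s: "vadd (vadd a b) (vadd c d) = {}"
      unfolding Q1_def by blast
    have c4: "card {a, b, c, d} = 4" using dd by simp
    have px: "part True z = {a, b, c, d}" "part False z = {}" unfolding z by (simp_all only: part_Pair) simp_all
    have cz: "card z = 4" unfolding z card_img_Pair by (rule c4)
    have zp: "z \<subseteq> positions r" using v unfolding z by auto
    show ?thesis unfolding inS_def using zp px cz c4 s vsum4[OF dd] t0 by simp
  next
    case qt
    then obtain a b c d where z: "z = Pair False ` {a, c} \<union> Pair True ` {b, d}"
      and v: "a \<in> vecs r" "b \<in> vecs r" "c \<in> vecs r" "d \<in> vecs r"
      and s: "\<tau> (vadd a c) = vadd b d" and nz: "vadd b d \<noteq> {}"
      unfolding Qtau_def by blast
    have bd: "b \<noteq> d" using nz by auto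
    have ac: "a \<noteq> c"
    proof
      assume "a = c" then have "vadd b d = {}" using s t0 by simp
      then show False using nz by simp
    qed
    have zp: "z \<subseteq> positions r" using v z by auto
    have "card z = card (part False z) + card (part True z)"
      using card_decomp zp finite_subset finite_positions by blast
    also have "\<dots> = 4" using ac bd z by simp
    finally show ?thesis unfolding inS_def using zp z ac bd s vsum2[OF ac] vsum2[OF bd] by simp
  qed
next
  assume h: "inS r \<tau> z \<and> card z = 4"
  let ?x = "part False z" and ?y = "part True z"
  have zp: "z \<subseteq> positions r" using h by (simp add: inS_def)
  have fz: "finite z" using zp finite_subset finite_positions by blast
  have xv: "?x \<subseteq> vecs r" and yv: "?y \<subseteq> vecs r" using part_vecs[OF zp] by auto
  have fx: "finite ?x" and fy: "finite ?y" using finite_part[OF zp] by auto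
  have cs: "card ?x + card ?y = 4" using card_decomp[OF fz] h by simp
  have ex: "even (card ?x)" and ey: "even (card ?y)" and rel: "\<tau> (vsum ?x) = vsum ?y"
    using h by (auto simp: inS_def)
  have sx: "vsum ?x \<in> vecs r" using xv vsum_vecs by blast
  have zz: "z = Pair False ` ?x \<union> Pair True ` ?y" by (rule z_decomp)
  have "card ?x = 0 \<or> card ?x = 2 \<or> card ?x = 4" using cs ex ey
    by presburger
  then consider (c40) "card ?x = 4" "card ?y = 0" | (c22) "card ?x = 2" "card ?y = 2"
    | (c04) "card ?x = 0" "card ?y = 4" using cs by auto
  then show "z \<in> SQS r \<tau>"
  proof cases
    case c40
    then have y0: "?y = {}" using fy by simp
    obtain a b c d where x: "?x = {a, b, c, d}" and dd: "distinct [a, b, c, d]"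
      using c40(1) card_4_iff by metis
    have "vsum ?x = {}" using rel y0 tau_zero[OF sx] by simp
    then have "vadd (vadd a b) (vadd c d) = {}" using x vsum4[OF dd] by simp
    moreover have "z = Pair False ` {a, b, c, d}" using zz x y0 by simp
    moreover have "a \<in> vecs r" "b \<in> vecs r" "c \<in> vecs r" "d \<in> vecs r" using xv x by auto
    ultimately have "z \<in> Q0 r" unfolding Q0_def using dd by blast
    then show ?thesis unfolding SQS_def by blast
  next
    case c04
    then have x0: "?x = {}" using fx by simp
    obtain a b c d where y: "?y = {a, b, c, d}" and dd: "distinct [a, b, c, d]"
      using c04(2) card_4_iff by metis
    have "vsum ?y = {}" using rel x0 t0 by simp
    then have "vadd (vadd a b) (vadd c d) = {}" using y vsum4[OF dd] by simp
    moreover have "z = Pair True ` {a, b, c, d}" using zz y x0 by simp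
    moreover have "a \<in> vecs r" "b \<in> vecs r" "c \<in> vecs r" "d \<in> vecs r" using yv y by auto
    ultimately have "z \<in> Q1 r" unfolding Q1_def using dd by blast
    then show ?thesis unfolding SQS_def by blast
  next
    case c22
    obtain a c where x: "?x = {a, c}" and ac: "a \<noteq> c" using c22(1) card_2_iff by metis
    obtain b d where y: "?y = {b, d}" and bd: "b \<noteq> d" using c22(2) card_2_iff by metis
    have "\<tau> (vadd a c) = vadd b d" using rel x y vsum2[OF ac] vsum2[OF bd] by simp
    moreover have "vadd b d \<noteq> {}" using bd by simp
    moreover have "z = Pair False ` {a, c} \<union> Pair True ` {b, d}" using zz x y by simp
    moreover have "a \<in> vecs r" "b \<in> vecs r" "c \<in> vecs r" "d \<in> vecs r" using xv yv x y by auto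
    ultimately have "z \<in> Qtau r \<tau>" unfolding Qtau_def by blast
    then show ?thesis unfolding SQS_def by blast
  qed
qed

end

definition good :: "'p set set \<Rightarrow> 'p set \<Rightarrow> 'p set \<Rightarrow> bool" where
  "good D Y P \<longleftrightarrow> Y \<subseteq> P \<and> finite P \<and> card Y = card (P - Y) \<and> (\<forall>B\<in>D. B \<subseteq> P \<and> card B = 4)
   \<and> (\<forall>B\<in>D. 3 \<le> card (B \<inter> Y) \<longrightarrow> B \<subseteq> Y) \<and> (\<forall>B\<in>D. 3 \<le> card (B - Y) \<longrightarrow> B \<inter> Y = {})
   \<and> (\<forall>B\<in>D. \<forall>B1\<in>D. (B \<subseteq> Y \<or> B \<inter> Y = {}) \<longrightarrow> card (B1 \<inter> Y) = 2 \<longrightarrow> card (B \<inter> B1) = 2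
        \<longrightarrow> wadd B B1 \<in> D)"

lemma goodD:
  assumes g: "good D Y P"
  shows "Y \<subseteq> P" "finite P" "card Y = card (P - Y)" "\<forall>B\<in>D. B \<subseteq> P \<and> card B = 4"
    "\<forall>B\<in>D. 3 \<le> card (B \<inter> Y) \<longrightarrow> B \<subseteq> Y" "\<forall>B\<in>D. 3 \<le> card (B - Y) \<longrightarrow> B \<inter> Y = {}"
    "\<forall>B\<in>D. \<forall>B1\<in>D. (B \<subseteq> Y \<or> B \<inter> Y = {}) \<longrightarrow> card (B1 \<inter> Y) = 2 \<longrightarrow> card (B \<inter> B1) = 2
        \<longrightarrow> wadd B B1 \<in> D"
  using g by (simp_all add: good_def)

inductive_set Phi :: "'p set set \<Rightarrow> 'p set \<Rightarrow> 'p set set" for D Y where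
  Phi0: "{} \<in> Phi D Y"
| Phi1: "B \<in> D \<Longrightarrow> card (B \<inter> Y) = 2 \<Longrightarrow> B \<in> Phi D Y"
| Phi2: "z \<in> Phi D Y \<Longrightarrow> B \<in> D \<Longrightarrow> B \<subseteq> Y \<or> B \<inter> Y = {} \<Longrightarrow> wadd z B \<in> Phi D Y"

lemma Phi_sub:
  assumes "\<forall>B\<in>D. B \<subseteq> P"
  shows "z \<in> Phi D Y \<Longrightarrow> z \<subseteq> P"
  by (induction z rule: Phi.induct) (use assms in \<open>auto simp: wadd_def\<close>)

lemma image_wadd: "inj_on f P \<Longrightarrow> A \<subseteq> P \<Longrightarrow> B \<subseteq> P \<Longrightarrow> f ` wadd A B = wadd (f ` A) (f ` B)"
  unfolding wadd_def inj_on_def by blast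

lemma Phi_image:
  assumes inj: "inj_on f P" and YP: "Y \<subseteq> P" and DP: "\<forall>B\<in>D. B \<subseteq> P"
  shows "z \<in> Phi D Y \<Longrightarrow> f ` z \<in> Phi ((`) f ` D) (f ` Y)"
proof (induction z rule: Phi.induct)
  case Phi0
  then show ?case using Phi.Phi0 by simp
next
  case (Phi1 B)
  have "f ` B \<inter> f ` Y = f ` (B \<inter> Y)" using inj DP Phi1(1) YP by (simp add: inj_on_image_Int)
  moreover have "card (f ` (B \<inter> Y)) = card (B \<inter> Y)"
    using inj YP by (meson card_image inf_le2 inj_on_subset subset_trans)
  ultimately show ?case using Phi1 by (intro Phi.Phi1) auto
next
  case (Phi2 z B)
  have zP: "z \<subseteq> P" using Phi_sub DP Phi2(1) by blast
  have BP: "B \<subseteq> P" using DP Phi2(2) by blast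
  have "f ` wadd z B = wadd (f ` z) (f ` B)" using image_wadd[OF inj zP BP] .
  moreover have "f ` B \<subseteq> f ` Y \<or> f ` B \<inter> f ` Y = {}"
    using Phi2(3) inj BP YP by (metis image_empty image_mono inj_on_image_Int)
  ultimately show ?case using Phi2 by (metis Phi.Phi2 image_eqI)
qed

lemma good_image:
  assumes bij: "bij_betw f P P" and g: "good D Y P"
  shows "good ((`) f ` D) (f ` Y) P"
proof -
  have inj: "inj_on f P" and im: "f ` P = P" using bij by (auto simp: bij_betw_def)
  have YP: "Y \<subseteq> P" and fP: "finite P" and cY: "card Y = card (P - Y)" and DP: "\<forall>B\<in>D. B \<subseteq> P \<and> card B = 4"
    and c1: "\<forall>B\<in>D. 3 \<le> card (B \<inter> Y) \<longrightarrow> B \<subseteq> Y"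
    and c2: "\<forall>B\<in>D. 3 \<le> card (B - Y) \<longrightarrow> B \<inter> Y = {}"
    and pt: "\<forall>B\<in>D. \<forall>B1\<in>D. (B \<subseteq> Y \<or> B \<inter> Y = {}) \<longrightarrow> card (B1 \<inter> Y) = 2 \<longrightarrow> card (B \<inter> B1) = 2
        \<longrightarrow> wadd B B1 \<in> D"
    using goodD[OF g] by auto
  have cardim: "card (f ` X) = card X" if "X \<subseteq> P" for X
    using inj that by (meson card_image inj_on_subset)
  have Int: "f ` (X \<inter> Z) = f ` X \<inter> f ` Z" if "X \<subseteq> P" "Z \<subseteq> P" for X Z
    using inj that by (simp add: inj_on_image_Int)
  have Diff: "f ` (X - Z) = f ` X - f ` Z" if "X \<subseteq> P" "Z \<subseteq> P" for X Z
    using inj that by (meson Diff_subset inj_on_image_set_diff subset_trans)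
  have sub: "f ` X \<subseteq> f ` Z \<longleftrightarrow> X \<subseteq> Z" if "X \<subseteq> P" "Z \<subseteq> P" for X Z
  proof
    assume "f ` X \<subseteq> f ` Z"
    then show "X \<subseteq> Z" using inj that inj_on_image_mem_iff by (metis image_subset_iff subset_iff)
  qed blast
  have "f ` Y \<subseteq> P" using YP im by blast
  moreover have "card (f ` Y) = card (P - f ` Y)"
  proof -
    have "P - f ` Y = f ` (P - Y)" using Diff[of P Y] YP im by simp
    then have "card (P - f ` Y) = card (P - Y)" using cardim[of "P - Y"] by simp
    then show ?thesis using cY cardim[OF YP] by simp
  qed
  moreover have "\<forall>B\<in>(`) f ` D. B \<subseteq> P \<and> card B = 4"
  proof
    fix B' assume "B' \<in> (`) f ` D"
    then obtain B where B: "B \<in> D" "B' = f ` B" by blast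
    then have BP: "B \<subseteq> P" "card B = 4" using DP by blast+
    show "B' \<subseteq> P \<and> card B' = 4" using B BP cardim[OF BP(1)] im by auto
  qed
  moreover have "\<forall>B\<in>(`) f ` D. 3 \<le> card (B \<inter> f ` Y) \<longrightarrow> B \<subseteq> f ` Y"
  proof
    fix B' assume "B' \<in> (`) f ` D"
    then obtain B where B: "B \<in> D" "B' = f ` B" by blast
    then have BP: "B \<subseteq> P" using DP by blast
    show "3 \<le> card (B' \<inter> f ` Y) \<longrightarrow> B' \<subseteq> f ` Y"
    proof
      assume "3 \<le> card (B' \<inter> f ` Y)"
      then have "3 \<le> card (B \<inter> Y)" using B BP YP Int[OF BP YP] cardim[of "B \<inter> Y"] by (metis Int_lower1 subset_trans)
      then have "B \<subseteq> Y" using c1 B by blast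
      then show "B' \<subseteq> f ` Y" using B by blast
    qed
  qed
  moreover have "\<forall>B\<in>(`) f ` D. 3 \<le> card (B - f ` Y) \<longrightarrow> B \<inter> f ` Y = {}"
  proof
    fix B' assume "B' \<in> (`) f ` D"
    then obtain B where B: "B \<in> D" "B' = f ` B" by blast
    then have BP: "B \<subseteq> P" using DP by blast
    show "3 \<le> card (B' - f ` Y) \<longrightarrow> B' \<inter> f ` Y = {}"
      using c2 B BP YP Diff[OF BP YP] Int[OF BP YP] cardim[of "B - Y"] by (metis Diff_subset image_empty subset_trans)
  qed
  moreover have "\<forall>B\<in>(`) f ` D. \<forall>B1\<in>(`) f ` D. (B \<subseteq> f ` Y \<or> B \<inter> f ` Y = {}) \<longrightarrow> card (B1 \<inter> f ` Y) = 2
      \<longrightarrow> card (B \<inter> B1) = 2 \<longrightarrow> wadd B B1 \<in> (`) f ` D"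
  proof (intro ballI impI)
    fix B' B1' assume "B' \<in> (`) f ` D" "B1' \<in> (`) f ` D"
    then obtain B B1 where B: "B \<in> D" "B' = f ` B" and B1: "B1 \<in> D" "B1' = f ` B1" by blast
    then have BP: "B \<subseteq> P" and B1P: "B1 \<subseteq> P" using DP by blast+
    assume h1: "B' \<subseteq> f ` Y \<or> B' \<inter> f ` Y = {}" and h2: "card (B1' \<inter> f ` Y) = 2"
      and h3: "card (B' \<inter> B1') = 2"
    have "B \<subseteq> Y \<or> B \<inter> Y = {}" using h1 B sub[OF BP YP] Int[OF BP YP] by auto
    moreover have "card (B1 \<inter> Y) = 2" using h2 B1 Int[OF B1P YP] cardim[of "B1 \<inter> Y"] B1P by (metis Int_lower1 subset_trans)
    moreover have "card (B \<inter> B1) = 2" using h3 B B1 Int[OF BP B1P] cardim[of "B \<inter> B1"] BP by (metis Int_lower1 subset_trans)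
    ultimately have "wadd B B1 \<in> D" using pt B B1 by blast
    moreover have "wadd B' B1' = f ` wadd B B1" using image_wadd[OF inj BP B1P] B B1 by simp
    ultimately show "wadd B' B1' \<in> (`) f ` D" by blast
  qed
  ultimately show ?thesis unfolding good_def using fP by blast
qed

lemma good_compl:
  assumes g: "good D Y P"
  shows "good D (P - Y) P"
proof -
  have YP: "Y \<subseteq> P" and fP: "finite P" and cY: "card Y = card (P - Y)" and DP: "\<forall>B\<in>D. B \<subseteq> P \<and> card B = 4"
    and c1: "\<forall>B\<in>D. 3 \<le> card (B \<inter> Y) \<longrightarrow> B \<subseteq> Y"
    and c2: "\<forall>B\<in>D. 3 \<le> card (B - Y) \<longrightarrow> B \<inter> Y = {}"
    and pt: "\<forall>B\<in>D. \<forall>B1\<in>D. (B \<subseteq> Y \<or> B \<inter> Y = {}) \<longrightarrow> card (B1 \<inter> Y) = 2 \<longrightarrow> card (B \<inter> B1) = 2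
        \<longrightarrow> wadd B B1 \<in> D"
    using goodD[OF g] by auto
  have PPY: "P - (P - Y) = Y" using YP by blast
  have split: "card (B \<inter> Y) + card (B - Y) = 4" if "B \<in> D" for B
  proof -
    have "finite B" using that DP fP finite_subset by blast
    then show ?thesis using that DP by (metis card_Int_Diff)
  qed
  have e1: "B \<inter> (P - Y) = B - Y" if "B \<in> D" for B using that DP by blast
  have e2: "B - (P - Y) = B \<inter> Y" if "B \<in> D" for B using that DP by blast
  have "\<forall>B\<in>D. 3 \<le> card (B \<inter> (P - Y)) \<longrightarrow> B \<subseteq> P - Y"
  proof (intro ballI impI)
    fix B assume B: "B \<in> D" and h: "3 \<le> card (B \<inter> (P - Y))"
    then have "3 \<le> card (B - Y)" using e1[OF B] by simp
    then have "B \<inter> Y = {}" using c2 B by blast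
    then show "B \<subseteq> P - Y" using DP B by blast
  qed
  moreover have "\<forall>B\<in>D. 3 \<le> card (B - (P - Y)) \<longrightarrow> B \<inter> (P - Y) = {}"
  proof (intro ballI impI)
    fix B assume B: "B \<in> D" and h: "3 \<le> card (B - (P - Y))"
    then have "3 \<le> card (B \<inter> Y)" using e2[OF B] by simp
    then have "B \<subseteq> Y" using c1 B by blast
    then show "B \<inter> (P - Y) = {}" by blast
  qed
  moreover have "\<forall>B\<in>D. \<forall>B1\<in>D. (B \<subseteq> P - Y \<or> B \<inter> (P - Y) = {}) \<longrightarrow> card (B1 \<inter> (P - Y)) = 2
      \<longrightarrow> card (B \<inter> B1) = 2 \<longrightarrow> wadd B B1 \<in> D"
  proof (intro ballI impI)
    fix B B1 assume B: "B \<in> D" and B1: "B1 \<in> D" and h1: "B \<subseteq> P - Y \<or> B \<inter> (P - Y) = {}"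
      and h2: "card (B1 \<inter> (P - Y)) = 2" and h3: "card (B \<inter> B1) = 2"
    have "B \<subseteq> Y \<or> B \<inter> Y = {}" using h1 B DP by blast
    moreover have "card (B1 \<inter> Y) = 2" using h2 e1[OF B1] split[OF B1] by simp
    ultimately show "wadd B B1 \<in> D" using pt B B1 h3 by blast
  qed
  ultimately show ?thesis unfolding good_def using PPY cY fP DP by auto
qed

definition M :: "nat set \<Rightarrow> nat set \<Rightarrow> nat set \<Rightarrow> nat set \<Rightarrow> (bool \<times> nat set) set" where
  "M a c b d = {(False, a), (False, c), (True, b), (True, d)}"

lemma part_ext: "(\<And>h. part h z = part h w) \<Longrightarrow> z = w"
  by (metis z_decomp)

lemma M_parts[simp]: "part False (M a c b d) = {a, c}" "part True (M a c b d) = {b, d}"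
  by (auto simp: M_def)

lemma M_sub: "a \<in> vecs r \<Longrightarrow> b \<in> vecs r \<Longrightarrow> c \<in> vecs r \<Longrightarrow> d \<in> vecs r \<Longrightarrow> M a c b d \<subseteq> positions r"
  by (auto simp: M_def)

lemma card_M: "a \<noteq> c \<Longrightarrow> b \<noteq> d \<Longrightarrow> card (M a c b d) = 4"
  by (auto simp: M_def)

context tauloc begin

abbreviation "D \<equiv> SQS r \<tau>"
abbreviation "P \<equiv> positions r"

lemma D_props: "B \<in> D \<Longrightarrow> B \<subseteq> P \<and> card B = 4 \<and> inS r \<tau> B"
  using SQS_iff by (auto simp: inS_def)

lemma M_in:
  assumes v: "a \<in> vecs r" "b \<in> vecs r" "c \<in> vecs r" "d \<in> vecs r"
  shows "M a c b d \<in> D \<longleftrightarrow> a \<noteq> c \<and> b \<noteq> d \<and> \<tau> (vadd a c) = vadd b d"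
proof
  assume h: "M a c b d \<in> D"
  then have c4: "card (M a c b d) = 4" and i: "inS r \<tau> (M a c b d)" using D_props by blast+
  have "card (M a c b d) = card {a, c} + card {b, d}"
    using card_decomp[of "M a c b d"] by (simp add: M_def)
  then have cs: "card {a, c} + card {b, d} = 4" using c4 by simp
  have le: "card {x, y} \<le> 2" for x y :: "nat set" by (cases "x = y") auto
  have ac: "a \<noteq> c"
  proof
    assume "a = c" then have "card {a, c} = 1" by simp
    then show False using cs le[of b d] by simp
  qed
  have bd: "b \<noteq> d"
  proof
    assume "b = d" then have "card {b, d} = 1" by simp
    then show False using cs le[of a c] by simp
  qed
  moreover have "\<tau> (vadd a c) = vadd b d" using i ac bd by (simp add: inS_def vsum2)
  ultimately show "a \<noteq> c \<and> b \<noteq> d \<and> \<tau> (vadd a c) = vadd b d" using ac by blast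
next
  assume h: "a \<noteq> c \<and> b \<noteq> d \<and> \<tau> (vadd a c) = vadd b d"
  have "inS r \<tau> (M a c b d)" unfolding inS_def using h M_sub[OF v(1,2,3,4)] by (simp add: vsum2)
  then show "M a c b d \<in> D" using SQS_iff card_M h by blast
qed

lemma F4_in:
  assumes "a \<in> vecs r" "b \<in> vecs r" "c \<in> vecs r" "d \<in> vecs r" "distinct [a, b, c, d]"
    "vadd (vadd a b) (vadd c d) = {}"
  shows "Pair h ` {a, b, c, d} \<in> D"
proof (cases h)
  case True
  then show ?thesis unfolding SQS_def Q1_def using assms by blast
next
  case False
  then show ?thesis unfolding SQS_def Q0_def using assms by blast
qed

lemma inS_empty: "inS r \<tau> {}"
  by (simp add: inS_def t0)

lemma inS_wadd_zero:
  assumes z: "inS r \<tau> z" and BP: "B \<subseteq> P" and e1: "even (card (part False B))" and e2: "even (card (part True B))"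
    and s1: "vsum (part False B) = {}" and s2: "vsum (part True B) = {}"
  shows "inS r \<tau> (wadd z B)"
proof -
  have zP: "z \<subseteq> P" using z by (simp add: inS_def)
  have f: "finite (part h z)" "finite (part h B)" for h using finite_part zP BP by blast+
  have "wadd z B \<subseteq> P" using zP BP by (auto simp: wadd_def)
  moreover have "even (card (part h (wadd z B)))" if "even (card (part h z))" "even (card (part h B))" for h
    using that f by (simp add: even_card_wadd)
  moreover have "vsum (part h (wadd z B)) = vsum (part h z)" if "vsum (part h B) = {}" for h
    using that f by (simp add: vsum_wadd)
  ultimately show ?thesis using z e1 e2 s1 s2 unfolding inS_def by simp
qed

lemma good_A: "good D (Pair False ` vecs r) P"
proof -
  let ?A = "Pair False ` vecs r"
  have AP: "?A \<subseteq> P" by auto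
  have PA: "P - ?A = Pair True ` vecs r" by (auto simp: positions_def)
  have cA: "card ?A = card (P - ?A)" unfolding PA by (simp add: card_img_Pair)
  have DP: "\<forall>B\<in>D. B \<subseteq> P \<and> card B = 4" using D_props by blast
  have IA: "B \<inter> ?A = Pair False ` part False B" if "B \<subseteq> P" for B
    using that by (auto simp: part_def)
  have DA: "B - ?A = Pair True ` part True B" if "B \<subseteq> P" for B
  proof -
    have "B - ?A = (Pair False ` part False B \<union> Pair True ` part True B) - ?A"
      using z_decomp[of B] by simp
    also have "\<dots> = Pair True ` part True B" using part_vecs[OF that] by auto
    finally show ?thesis .
  qed
  have sums: "card (part False B) + card (part True B) = 4" "even (card (part False B))"
    "even (card (part True B))" "finite (part False B)" "finite (part True B)" if "B \<in> D" for B
    using D_props[OF that] card_decomp[of B] finite_part[of B r] finite_subset[of B P]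
    by (auto simp: inS_def)
  have c1: "\<forall>B\<in>D. 3 \<le> card (B \<inter> ?A) \<longrightarrow> B \<subseteq> ?A"
  proof (intro ballI impI)
    fix B assume B: "B \<in> D" and h: "3 \<le> card (B \<inter> ?A)"
    have BP: "B \<subseteq> P" using D_props B by blast
    have "3 \<le> card (part False B)" using h IA[OF BP] by (simp add: card_img_Pair)
    then have "card (part True B) = 0" using sums[OF B] by presburger
    then have "part True B = {}" using sums[OF B] by simp
    then show "B \<subseteq> ?A"
    proof (intro subsetI)
      fix p assume pB: "p \<in> B" and e: "part True B = {}"
      obtain hh x where p: "p = (hh, x)" by fastforce
      have "hh = False" using e pB p by (cases hh) (auto simp: part_def)
      moreover have "x \<in> vecs r" using BP pB p by auto
      ultimately show "p \<in> ?A" using p by simp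
    qed
  qed
  have c2: "\<forall>B\<in>D. 3 \<le> card (B - ?A) \<longrightarrow> B \<inter> ?A = {}"
  proof (intro ballI impI)
    fix B assume B: "B \<in> D" and h: "3 \<le> card (B - ?A)"
    have BP: "B \<subseteq> P" using D_props B by blast
    have "3 \<le> card (part True B)" using h DA[OF BP] by (simp add: card_img_Pair)
    then have "card (part False B) = 0" using sums[OF B] by presburger
    then have "part False B = {}" using sums[OF B] by simp
    then show "B \<inter> ?A = {}" using IA[OF BP] by simp
  qed
  have pt: "\<forall>B\<in>D. \<forall>B1\<in>D. (B \<subseteq> ?A \<or> B \<inter> ?A = {}) \<longrightarrow> card (B1 \<inter> ?A) = 2 \<longrightarrow> card (B \<inter> B1) = 2
        \<longrightarrow> wadd B B1 \<in> D"
  proof (intro ballI impI)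
    fix B B1 assume B: "B \<in> D" and B1: "B1 \<in> D" and side: "B \<subseteq> ?A \<or> B \<inter> ?A = {}"
      and h2: "card (B1 \<inter> ?A) = 2" and h3: "card (B \<inter> B1) = 2"
    have BP: "B \<subseteq> P" and iB: "inS r \<tau> B" and cB: "card B = 4" using D_props B by blast+
    have B1P: "B1 \<subseteq> P" and iB1: "inS r \<tau> B1" and cB1: "card B1 = 4" using D_props B1 by blast+
    have sx: "vsum (part False B) \<in> vecs r" using part_vecs[OF BP] vsum_vecs by blast
    have zs: "vsum (part False B) = {} \<and> vsum (part True B) = {}"
    proof (cases "B \<subseteq> ?A")
      case True
      then have "part True B = {}" by (auto simp: part_def)
      then show ?thesis using iB tau_zero[OF sx] by (simp add: inS_def)
    next
      case False
      then have "B \<inter> ?A = {}" using side by blast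
      then have "part False B = {}" using IA[OF BP] by auto
      then show ?thesis using iB t0 by (simp add: inS_def)
    qed
    have "inS r \<tau> (wadd B1 B)"
      using inS_wadd_zero[OF iB1 BP] iB zs by (simp add: inS_def)
    moreover have "card (wadd B1 B) = 4"
    proof -
      have fB: "finite B" "finite B1" using BP B1P finite_subset finite_positions by blast+
      have "card (wadd B B1) + 2 * card (B \<inter> B1) = card B + card B1" using card_wadd[OF fB] .
      then show ?thesis using h3 cB cB1 wadd_comm[of B B1] by simp
    qed
    ultimately show "wadd B B1 \<in> D" using SQS_iff wadd_comm[of B B1] by simp
  qed
  show ?thesis unfolding good_def using AP cA DP c1 c2 pt by simp
qed

end

context tauloc begin

lemma vadd_fix: "vadd a b = a \<longleftrightarrow> b = {}" by (auto simp: vadd_def)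
lemma wadd_back: "wadd A (wadd X A) = X" by (auto simp: wadd_def)

abbreviation "AA \<equiv> Pair False ` vecs r"

lemma ham_closure:
  "X \<subseteq> vecs r \<Longrightarrow> even (card X) \<Longrightarrow> vsum X = {} \<Longrightarrow> w \<in> Phi D AA \<Longrightarrow> wadd w (Pair h ` X) \<in> Phi D AA"
proof (induction "card X" arbitrary: X w rule: less_induct)
  case less
  show ?case
  proof (cases "X = {}")
    case True
    then show ?thesis using less.prems by simp
  next
    case False
    have fX: "finite X" using less.prems(1) finite_subset finite_vecs by blast
    have c0: "card X \<noteq> 0" using False fX by simp
    have c2: "card X \<noteq> 2"
    proof
      assume "card X = 2"
      then obtain p q where "X = {p, q}" "p \<noteq> q" using card_2_iff by metis
      then show False using less.prems(3) by (simp add: vsum2)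
    qed
    have "3 \<le> card X" using c0 c2 less.prems(2) by presburger
    then obtain T where T: "T \<subseteq> X" "card T = 3" by (meson obtain_subset_with_card_n)
    then obtain p q s where pqs: "T = {p, q, s}" "p \<noteq> q" "q \<noteq> s" "p \<noteq> s" using card_3_iff by metis
    have inX: "p \<in> X" "q \<in> X" "s \<in> X" using T pqs by auto
    have vv: "p \<in> vecs r" "q \<in> vecs r" "s \<in> vecs r" using inX less.prems(1) by auto
    define t where "t = vadd p (vadd q s)"
    have tv: "t \<in> vecs r" using vv by (simp add: t_def)
    have t1: "t = vadd p (vadd q s)" "t = vadd q (vadd p s)" "t = vadd s (vadd p q)"
      unfolding t_def by (auto simp: vadd_def)
    have "t \<noteq> p" using pqs t1(1) vadd_fix[of p "vadd q s"] by simp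
    moreover have "t \<noteq> q" using pqs t1(2) vadd_fix[of q "vadd p s"] by simp
    moreover have "t \<noteq> s" using pqs t1(3) vadd_fix[of s "vadd p q"] by simp
    ultimately have tn: "t \<noteq> p" "t \<noteq> q" "t \<noteq> s" by blast+
    have dd: "distinct [p, q, s, t]" using pqs tn by auto
    have sum0: "vadd (vadd p q) (vadd s t) = {}" unfolding t_def
      by (simp add: vadd_assoc vadd_left_comm[of q s] vadd_left_comm[of s])
    let ?Q = "{p, q, s, t}"
    have BD: "Pair h ` ?Q \<in> D" using F4_in[OF vv tv dd sum0] .
    have side: "Pair h ` ?Q \<subseteq> AA \<or> Pair h ` ?Q \<inter> AA = {}"
      using vv tv by (cases h) auto
    define X' where "X' = wadd X ?Q"
    have fQ: "finite ?Q" by simp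
    have "card X' + 2 * card (X \<inter> ?Q) = card X + card ?Q"
      unfolding X'_def using card_wadd[OF fX fQ] .
    moreover have "card ?Q = 4" using dd by simp
    moreover have "3 \<le> card (X \<inter> ?Q)"
    proof -
      have "{p, q, s} \<subseteq> X \<inter> ?Q" using inX by auto
      then have "card {p, q, s} \<le> card (X \<inter> ?Q)" using fX by (intro card_mono) auto
      then show ?thesis using pqs by simp
    qed
    ultimately have lt: "card X' < card X" by linarith
    have X'v: "X' \<subseteq> vecs r" unfolding X'_def using less.prems(1) vv tv by (auto simp: wadd_def)
    have X'e: "even (card X')" unfolding X'_def using fX fQ less.prems(2) \<open>card ?Q = 4\<close>
      by (simp add: even_card_wadd)
    have X's: "vsum X' = {}" unfolding X'_def using fX fQ less.prems(3) vsum4[OF dd] sum0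
      by (simp add: vsum_wadd)
    have w1: "wadd w (Pair h ` ?Q) \<in> Phi D AA" using Phi.Phi2[OF less.prems(4) BD side] .
    have IH: "wadd (wadd w (Pair h ` ?Q)) (Pair h ` X') \<in> Phi D AA"
      using less.hyps[OF lt X'v X'e X's w1] .
    have "Pair h ` X = wadd (Pair h ` ?Q) (Pair h ` X')"
    proof -
      have "X = wadd ?Q X'" unfolding X'_def by (auto simp: wadd_def)
      then have "Pair h ` X = Pair h ` wadd ?Q X'" by simp
      also have "\<dots> = wadd (Pair h ` ?Q) (Pair h ` X')"
        by (rule image_wadd[of "Pair h" UNIV]) (auto simp: inj_on_def)
      finally show ?thesis .
    qed
    then show ?thesis using IH by (simp add: wadd_assoc)
  qed
qed

lemma S_in_Phi:
  assumes z: "inS r \<tau> z"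
  shows "z \<in> Phi D AA"
proof -
  let ?x = "part False z" and ?y = "part True z"
  have zP: "z \<subseteq> P" using z by (simp add: inS_def)
  have xv: "?x \<subseteq> vecs r" and yv: "?y \<subseteq> vecs r" using part_vecs[OF zP] by auto
  have fx: "finite ?x" and fy: "finite ?y" using finite_part[OF zP] by auto
  have ex: "even (card ?x)" and ey: "even (card ?y)" and rel: "\<tau> (vsum ?x) = vsum ?y"
    using z by (auto simp: inS_def)
  have sv: "vsum ?x \<in> vecs r" using xv vsum_vecs by blast
  have zz: "z = wadd (Pair False ` ?x) (Pair True ` ?y)"
  proof (rule part_ext)
    fix h show "part h z = part h (wadd (Pair False ` ?x) (Pair True ` ?y))"
      by (cases h) simp_all
  qed
  show ?thesis
  proof (cases "vsum ?x = {}")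
    case True
    then have sy: "vsum ?y = {}" using rel t0 by simp
    have "wadd {} (Pair False ` ?x) \<in> Phi D AA" using ham_closure[OF xv ex True Phi.Phi0] .
    then have "wadd (wadd {} (Pair False ` ?x)) (Pair True ` ?y) \<in> Phi D AA"
      using ham_closure[OF yv ey sy] by blast
    then show ?thesis using zz by simp
  next
    case False
    let ?s = "vsum ?x"
    have ts: "\<tau> ?s \<noteq> {}" using False tau_zero[OF sv] by simp
    have tsv: "\<tau> ?s \<in> vecs r" using sv by simp
    let ?B = "M ?s {} (\<tau> ?s) {}"
    have BD: "?B \<in> D" using M_in[OF sv tsv empty_vecs empty_vecs] False ts by simp
    have "?B \<inter> AA = {(False, ?s), (False, {})}" using sv by (auto simp: M_def)
    then have "card (?B \<inter> AA) = 2" using False by simp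
    then have B1: "?B \<in> Phi D AA" using Phi.Phi1[OF BD] by blast
    define x' where "x' = wadd ?x {?s, {}}"
    define y' where "y' = wadd ?y {\<tau> ?s, {}}"
    have x'v: "x' \<subseteq> vecs r" unfolding x'_def using xv sv by (auto simp: wadd_def)
    have y'v: "y' \<subseteq> vecs r" unfolding y'_def using yv tsv by (auto simp: wadd_def)
    have x'e: "even (card x')" unfolding x'_def using fx ex False by (simp add: even_card_wadd)
    have y'e: "even (card y')" unfolding y'_def using fy ey ts by (simp add: even_card_wadd)
    have x's: "vsum x' = {}" unfolding x'_def using fx False by (simp add: vsum_wadd vsum2)
    have y's: "vsum y' = {}" unfolding y'_def using fy ts rel by (simp add: vsum_wadd vsum2)
    have s1: "wadd ?B (Pair False ` x') \<in> Phi D AA" using ham_closure[OF x'v x'e x's B1] .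
    have s2: "wadd (wadd ?B (Pair False ` x')) (Pair True ` y') \<in> Phi D AA"
      using ham_closure[OF y'v y'e y's s1] .
    have "z = wadd (wadd ?B (Pair False ` x')) (Pair True ` y')"
    proof (rule part_ext)
      fix h show "part h z = part h (wadd (wadd ?B (Pair False ` x')) (Pair True ` y'))"
        unfolding x'_def y'_def by (cases h) (simp_all add: M_def wadd_back)
    qed
    then show ?thesis using s2 by simp
  qed
qed

end

lemma vadd_fix2: "vadd a b = b \<longleftrightarrow> a = {}" by (auto simp: vadd_def)
lemma vadd_swap_eq: "vadd a x = c \<longleftrightarrow> x = vadd a c" by (auto simp: vadd_def)

context tauloc begin

lemma card3_sub:
  assumes "{p1, p2, p3} \<subseteq> B \<inter> Y" "p1 \<noteq> p2" "p2 \<noteq> p3" "p1 \<noteq> p3" "finite B"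
  shows "3 \<le> card (B \<inter> Y)"
proof -
  have "card {p1, p2, p3} \<le> card (B \<inter> Y)" using assms by (intro card_mono) auto
  then show ?thesis using assms by simp
qed

lemma F1:
  assumes g: "good D Y P"
    and v: "a \<in> vecs r" "c \<in> vecs r" "b \<in> vecs r" "d \<in> vecs r" "x \<in> vecs r"
    and BD: "M a c b d \<in> D" and BY: "M a c b d \<subseteq> Y"
    and nx: "(False, vadd a x) \<notin> Y"
  shows "\<tau> (vadd x (vadd a c)) = vadd (\<tau> x) (vadd b d)"
proof -
  have ac: "a \<noteq> c" and bd: "b \<noteq> d" and rel: "\<tau> (vadd a c) = vadd b d"
    using M_in[OF v(1,3,2,4)] BD by auto
  have aY: "(False, a) \<in> Y" "(False, c) \<in> Y" "(True, b) \<in> Y" "(True, d) \<in> Y"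
    using BY by (auto simp: M_def)
  have x0: "x \<noteq> {}" using nx aY by auto
  have xh: "x \<noteq> vadd a c" using nx aY by auto
  have tx0: "\<tau> x \<noteq> {}" using x0 tau_zero[OF v(5)] by simp
  have txk: "\<tau> x \<noteq> vadd b d" using xh rel tau_inj[OF v(5), of "vadd a c"] v by simp
  define a2 where "a2 = vadd a x"
  define b2 where "b2 = vadd b (\<tau> x)"
  have a2v: "a2 \<in> vecs r" and b2v: "b2 \<in> vecs r" using v by (simp_all add: a2_def b2_def)
  have aa2: "a \<noteq> a2" using x0 vadd_fix[of a x] by (auto simp: a2_def)
  have bb2: "b \<noteq> b2" using tx0 vadd_fix[of b "\<tau> x"] by (auto simp: b2_def)
  have ca2: "c \<noteq> a2" using xh vadd_swap_eq[of a x c] by (auto simp: a2_def)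
  have db2: "d \<noteq> b2" using txk vadd_swap_eq[of b "\<tau> x" d] by (auto simp: b2_def)
  have B1D: "M a a2 b b2 \<in> D"
    using M_in[OF v(1,3) a2v b2v] aa2 bb2 by (simp add: a2_def b2_def)
  have fB1: "finite (M a a2 b b2)" by (simp add: M_def)
  have nb2: "(True, b2) \<notin> Y"
  proof
    assume b2Y: "(True, b2) \<in> Y"
    have "{(False, a), (True, b), (True, b2)} \<subseteq> M a a2 b b2 \<inter> Y" using aY b2Y by (auto simp: M_def)
    then have "3 \<le> card (M a a2 b b2 \<inter> Y)" using bb2 fB1 by (intro card3_sub) auto
    then have "M a a2 b b2 \<subseteq> Y" using goodD(5)[OF g] B1D by blast
    then show False using nx by (auto simp: M_def a2_def)
  qed
  have I1: "M a a2 b b2 \<inter> Y = {(False, a), (True, b)}"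
    using aY nb2 nx by (auto simp: M_def a2_def)
  have I2: "M a c b d \<inter> M a a2 b b2 = {(False, a), (True, b)}"
    using ac bd aa2 bb2 ca2 db2 by (auto simp: M_def)
  have "wadd (M a c b d) (M a a2 b b2) \<in> D"
    using goodD(7)[OF g] BD B1D BY I1 I2 by simp
  moreover have "wadd (M a c b d) (M a a2 b b2) = M c a2 d b2"
    using ac bd aa2 bb2 ca2 db2 by (auto simp: M_def wadd_def)
  ultimately have "M c a2 d b2 \<in> D" by simp
  then have "\<tau> (vadd c a2) = vadd d b2" using M_in[OF v(2,4) a2v b2v] by simp
  moreover have "vadd c a2 = vadd x (vadd a c)" unfolding a2_def by (auto simp: vadd_def)
  moreover have "vadd d b2 = vadd (\<tau> x) (vadd b d)" unfolding b2_def by (auto simp: vadd_def)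
  ultimately show ?thesis by simp
qed

end

context tauloc begin

lemma additive:
  assumes g: "good D Y P" and ev: "e \<in> vecs r" and ne: "(False, e) \<notin> Y"
    and v: "a \<in> vecs r" "c \<in> vecs r" "b \<in> vecs r" "d \<in> vecs r"
    and BD: "M a c b d \<in> D" and BY: "M a c b d \<subseteq> Y" and vv: "v \<in> vecs r"
  shows "\<tau> (vadd v (vadd a c)) = vadd (\<tau> v) (vadd b d)"
proof -
  have ac: "a \<noteq> c" and bd: "b \<noteq> d" and rel: "\<tau> (vadd a c) = vadd b d"
    using M_in[OF v(1,3,2,4)] BD by auto
  have aY: "(False, a) \<in> Y" "(False, c) \<in> Y" "(True, b) \<in> Y" "(True, d) \<in> Y"
    using BY by (auto simp: M_def)
  show ?thesis
  proof (cases "(False, vadd a v) \<in> Y")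
    case False
    then show ?thesis using F1[OF g v(1,2,3,4) vv BD BY] by simp
  next
    case pY: True
    show ?thesis
    proof (cases "v = {} \<or> v = vadd a c")
      case True
      then show ?thesis using rel t0 by auto
    next
      case False
      then have v0: "v \<noteq> {}" and vh: "v \<noteq> vadd a c" by auto
      define p where "p = vadd a v"
      define q where "q = vadd c v"
      define u where "u = vadd v (vadd a c)"
      define w where "w = vadd a e"
      have pv: "p \<in> vecs r" and qv: "q \<in> vecs r" and uv: "u \<in> vecs r" and wv: "w \<in> vecs r"
        using v vv ev by (simp_all add: p_def q_def u_def w_def)
      have pY': "(False, p) \<in> Y" using pY by (simp add: p_def)
      have tv0: "\<tau> v \<noteq> {}" using v0 tau_zero[OF vv] by simp
      have u0: "u \<noteq> {}" using vh by (auto simp: u_def)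
      have tu0: "\<tau> u \<noteq> {}" using u0 tau_zero[OF uv] by simp
      have ap: "a \<noteq> p" using v0 vadd_fix[of a v] by (auto simp: p_def)
      have cp: "c \<noteq> p" using vh vadd_swap_eq[of a v c] by (auto simp: p_def)
      have aq: "a \<noteq> q" using vh vadd_swap_eq[of c v a] vadd_comm[of a c] by (auto simp: q_def)
      have cq: "c \<noteq> q" using v0 vadd_fix[of c v] by (auto simp: q_def)
      have pq: "p \<noteq> q" using ac by (simp add: p_def q_def)
      have b2v: "vadd b (\<tau> v) \<in> vecs r" using v vv by simp
      have B2D: "M a p b (vadd b (\<tau> v)) \<in> D"
        using M_in[OF v(1,3) pv b2v] ap tv0 vadd_fix[of b "\<tau> v"] by (simp add: p_def)
      have B2Y: "M a p b (vadd b (\<tau> v)) \<subseteq> Y"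
      proof -
        have "{(False, a), (False, p), (True, b)} \<subseteq> M a p b (vadd b (\<tau> v)) \<inter> Y"
          using aY pY' by (auto simp: M_def)
        then have "3 \<le> card (M a p b (vadd b (\<tau> v)) \<inter> Y)" by (rule card3_sub) (use ap in \<open>auto simp: M_def\<close>)
        then show ?thesis using goodD(5)[OF g] B2D by blast
      qed
      have QD: "Pair False ` {a, c, p, q} \<in> D"
      proof (rule F4_in[OF v(1,2) pv qv])
        show "distinct [a, c, p, q]" using ac ap cp aq cq pq by auto
        show "vadd (vadd a c) (vadd p q) = {}" unfolding p_def q_def by (auto simp: vadd_def)
      qed
      have qY: "(False, q) \<in> Y"
      proof -
        have "{(False, a), (False, c), (False, p)} \<subseteq> Pair False ` {a, c, p, q} \<inter> Y"
          using aY pY' by auto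
        then have "3 \<le> card (Pair False ` {a, c, p, q} \<inter> Y)" by (rule card3_sub) (use ac ap cp in auto)
        then have "Pair False ` {a, c, p, q} \<subseteq> Y" using goodD(5)[OF g] QD by blast
        then show ?thesis by auto
      qed
      have aqu: "vadd a q = u" unfolding q_def u_def by (auto simp: vadd_def)
      have b3v: "vadd b (\<tau> u) \<in> vecs r" using v uv by simp
      have B3D: "M a q b (vadd b (\<tau> u)) \<in> D"
        using M_in[OF v(1,3) qv b3v] aq tu0 vadd_fix[of b "\<tau> u"] aqu by simp
      have B3Y: "M a q b (vadd b (\<tau> u)) \<subseteq> Y"
      proof -
        have "{(False, a), (False, q), (True, b)} \<subseteq> M a q b (vadd b (\<tau> u)) \<inter> Y"
          using aY qY by (auto simp: M_def)
        then have "3 \<le> card (M a q b (vadd b (\<tau> u)) \<inter> Y)" by (rule card3_sub) (use aq in \<open>auto simp: M_def\<close>)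
        then show ?thesis using goodD(5)[OF g] B3D by blast
      qed
      have ea: "e \<noteq> a" using ne aY by auto
      have ep: "e \<noteq> p" using ne pY' by auto
      have evY: "(False, vadd e v) \<notin> Y"
      proof
        assume evY: "(False, vadd e v) \<in> Y"
        have evv: "vadd e v \<in> vecs r" using ev vv by simp
        have d1: "a \<noteq> vadd e v" using ep by (auto simp: p_def vadd_def)
        have d2: "p \<noteq> vadd e v" using ea by (auto simp: p_def vadd_def)
        have d3: "e \<noteq> vadd e v" using v0 vadd_fix[of e v] by auto
        have QD': "Pair False ` {a, p, e, vadd e v} \<in> D"
        proof (rule F4_in[OF v(1) pv ev evv])
          show "distinct [a, p, e, vadd e v]" using ap ea ep d1 d2 d3 by auto
          show "vadd (vadd a p) (vadd e (vadd e v)) = {}" unfolding p_def by (auto simp: vadd_def)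
        qed
        have "{(False, a), (False, p), (False, vadd e v)} \<subseteq> Pair False ` {a, p, e, vadd e v} \<inter> Y"
          using aY pY' evY by auto
        then have "3 \<le> card (Pair False ` {a, p, e, vadd e v} \<inter> Y)" by (rule card3_sub) (use ap d1 d2 in auto)
        then have "Pair False ` {a, p, e, vadd e v} \<subseteq> Y" using goodD(5)[OF g] QD' by blast
        then show False using ne by auto
      qed
      have wvv: "vadd w v \<in> vecs r" using wv vv by simp
      have i1: "\<tau> (vadd (vadd w v) (vadd a c)) = vadd (\<tau> (vadd w v)) (vadd b d)"
      proof (rule F1[OF g v(1,2,3,4) wvv BD BY])
        have "vadd a (vadd w v) = vadd e v" unfolding w_def by (auto simp: vadd_def)
        then show "(False, vadd a (vadd w v)) \<notin> Y" using evY by simp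
      qed
      have i2: "\<tau> (vadd w v) = vadd (\<tau> w) (\<tau> v)"
      proof -
        have "(False, vadd a w) \<notin> Y" using ne by (simp add: w_def)
        then have "\<tau> (vadd w (vadd a p)) = vadd (\<tau> w) (vadd b (vadd b (\<tau> v)))"
          using F1[OF g v(1) pv v(3) b2v wv B2D B2Y] by simp
        then show ?thesis by (simp add: p_def)
      qed
      have i3: "\<tau> (vadd w u) = vadd (\<tau> w) (\<tau> u)"
      proof -
        have "(False, vadd a w) \<notin> Y" using ne by (simp add: w_def)
        then have "\<tau> (vadd w (vadd a q)) = vadd (\<tau> w) (vadd b (vadd b (\<tau> u)))"
          using F1[OF g v(1) qv v(3) b3v wv B3D B3Y] by simp
        then show ?thesis by (simp add: aqu)
      qed
      have "vadd w u = vadd (vadd w v) (vadd a c)" unfolding u_def by (simp add: vadd_assoc)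
      then have "vadd (\<tau> w) (\<tau> u) = vadd (vadd (\<tau> w) (\<tau> v)) (vadd b d)" using i1 i2 i3 by simp
      then have "\<tau> u = vadd (\<tau> v) (vadd b d)" by (simp add: vadd_assoc)
      then show ?thesis by (simp add: u_def)
    qed
  qed
qed

end

context tauloc begin

lemma exists_outside:
  assumes g: "good D Y P" and bY: "(True, b) \<in> Y"
  shows "\<exists>e \<in> vecs r. (False, e) \<notin> Y"
proof (rule ccontr)
  assume "\<not> (\<exists>e \<in> vecs r. (False, e) \<notin> Y)"
  then have "insert (True, b) AA \<subseteq> Y" using bY by auto
  moreover have YP: "Y \<subseteq> P" and cY: "card Y = card (P - Y)" using goodD[OF g] by auto
  ultimately have "card (insert (True, b) AA) \<le> card Y"
    by (meson card_mono finite_positions finite_subset)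
  moreover have "card (insert (True, b) AA) = 2 ^ r + 1"
    by (simp add: card_img_Pair card_vecs image_iff)
  moreover have "card P = card Y + card (P - Y)"
    using YP by (metis card_Diff_subset finite_positions finite_subset card_mono le_add_diff_inverse)
  ultimately show False using cY card_positions by simp
qed

lemma closure_in:
  assumes g: "good D Y P" and z: "inS r \<tau> z" and BD: "B \<in> D" and BY: "B \<subseteq> Y"
  shows "inS r \<tau> (wadd z B)"
proof -
  have BP: "B \<subseteq> P" and iB: "inS r \<tau> B" and cB: "card B = 4" using D_props[OF BD] by auto
  let ?xB = "part False B" and ?yB = "part True B"
  have fB: "finite B" using BP finite_subset finite_positions by blast
  have fxB: "finite ?xB" and fyB: "finite ?yB" using finite_part[OF BP] by auto
  have cs: "card ?xB + card ?yB = 4" using card_decomp[OF fB] cB by simp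
  have exB: "even (card ?xB)" and eyB: "even (card ?yB)" and relB: "\<tau> (vsum ?xB) = vsum ?yB"
    using iB by (auto simp: inS_def)
  have sxv: "vsum ?xB \<in> vecs r" using part_vecs[OF BP] vsum_vecs by blast
  show ?thesis
  proof (cases "vsum ?xB = {}")
    case True
    then have "vsum ?yB = {}" using relB t0 by simp
    then show ?thesis using inS_wadd_zero[OF z BP exB eyB True] by simp
  next
    case False
    have "card ?xB \<noteq> 0" using False fxB by auto
    moreover have "card ?xB \<noteq> 4"
    proof
      assume "card ?xB = 4"
      then have "?yB = {}" using cs fyB by simp
      then show False using relB tau_zero[OF sxv] False by simp
    qed
    ultimately have c2: "card ?xB = 2" "card ?yB = 2" using cs exB eyB by presburger+
    obtain a c where x: "?xB = {a, c}" and ac: "a \<noteq> c" using c2(1) card_2_iff by metis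
    obtain b d where y: "?yB = {b, d}" and bd: "b \<noteq> d" using c2(2) card_2_iff by metis
    have v: "a \<in> vecs r" "c \<in> vecs r" "b \<in> vecs r" "d \<in> vecs r" using part_vecs[OF BP, of False] part_vecs[OF BP, of True] x y by auto
    have BM: "B = M a c b d"
    proof (rule part_ext)
      fix h show "part h B = part h (M a c b d)" using x y by (cases h) simp_all
    qed
    have rel: "\<tau> (vadd a c) = vadd b d" using relB x y ac bd by (simp add: vsum2)
    have MD: "M a c b d \<in> D" using BD BM by simp
    have MY: "M a c b d \<subseteq> Y" using BY BM by simp
    have bY: "(True, b) \<in> Y" using MY by (auto simp: M_def)
    obtain e where ev: "e \<in> vecs r" and ne: "(False, e) \<notin> Y" using exists_outside[OF g bY] by blast
    have add: "\<tau> (vadd s (vadd a c)) = vadd (\<tau> s) (vadd b d)" if "s \<in> vecs r" for s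
      using additive[OF g ev ne v MD MY that] .
    let ?x = "part False z" and ?y = "part True z"
    have zP: "z \<subseteq> P" using z by (simp add: inS_def)
    have fx: "finite ?x" and fy: "finite ?y" using finite_part[OF zP] by auto
    have sx: "vsum ?x \<in> vecs r" using part_vecs[OF zP] vsum_vecs by blast
    have rz: "\<tau> (vsum ?x) = vsum ?y" and ex: "even (card ?x)" and ey: "even (card ?y)"
      using z by (auto simp: inS_def)
    have "wadd z B \<subseteq> P" using zP BP by (auto simp: wadd_def)
    moreover have "even (card (part False (wadd z B)))" using fx fxB ex exB by (simp add: even_card_wadd)
    moreover have "even (card (part True (wadd z B)))" using fy fyB ey eyB by (simp add: even_card_wadd)
    moreover have "\<tau> (vsum (part False (wadd z B))) = vsum (part True (wadd z B))"
    proof -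
      have "vsum (part False (wadd z B)) = vadd (vsum ?x) (vadd a c)"
        using fx fxB x ac by (simp add: vsum_wadd vsum2)
      moreover have "vsum (part True (wadd z B)) = vadd (vsum ?y) (vadd b d)"
        using fy fyB y bd by (simp add: vsum_wadd vsum2)
      ultimately show ?thesis using add[OF sx] rz by simp
    qed
    ultimately show ?thesis unfolding inS_def by blast
  qed
qed

lemma Phi_in_S:
  assumes g: "good D Y P"
  shows "z \<in> Phi D Y \<Longrightarrow> inS r \<tau> z"
proof (induction z rule: Phi.induct)
  case Phi0
  then show ?case using inS_empty .
next
  case (Phi1 B)
  then show ?case using D_props by blast
next
  case (Phi2 z B)
  show ?case
  proof (cases "B \<subseteq> Y")
    case True
    then show ?thesis using closure_in[OF g Phi2.IH Phi2.hyps(2)] by blast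
  next
    case False
    then have "B \<inter> Y = {}" using Phi2.hyps(3) by blast
    moreover have "B \<subseteq> P" using D_props Phi2.hyps(2) by blast
    ultimately have "B \<subseteq> P - Y" by blast
    then show ?thesis using closure_in[OF good_compl[OF g] Phi2.IH Phi2.hyps(2)] by blast
  qed
qed

end

lemma incl:
  assumes t1: "tauloc r \<tau>" and t2: "tauloc r \<tau>'" and bij: "bij_betw \<pi> (positions r) (positions r)"
    and eq: "(image \<pi>) ` SQS r \<tau> = SQS r \<tau>'"
  shows "(image \<pi>) ` S_code r \<tau> \<subseteq> S_code r \<tau>'"
proof
  fix w assume "w \<in> (image \<pi>) ` S_code r \<tau>"
  then obtain z where z: "z \<in> S_code r \<tau>" and w: "w = \<pi> ` z" by blast
  have bt1: "bij_betw \<tau> (vecs r) (vecs r)" and bt2: "bij_betw \<tau>' (vecs r) (vecs r)"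
    using t1 t2 by (auto simp: tauloc_def)
  have iz: "inS r \<tau> z" using z S_code_iff[OF bt1] by blast
  have "z \<in> Phi (SQS r \<tau>) (Pair False ` vecs r)" using tauloc.S_in_Phi[OF t1 iz] .
  moreover have inj: "inj_on \<pi> (positions r)" using bij by (simp add: bij_betw_def)
  moreover have DP: "\<forall>B\<in>SQS r \<tau>. B \<subseteq> positions r" using tauloc.D_props[OF t1] by blast
  moreover have "Pair False ` vecs r \<subseteq> positions r" by auto
  ultimately have "\<pi> ` z \<in> Phi ((image \<pi>) ` SQS r \<tau>) (\<pi> ` (Pair False ` vecs r))"
    using Phi_image[of \<pi> "positions r" "Pair False ` vecs r" "SQS r \<tau>"] by blast
  then have m: "\<pi> ` z \<in> Phi (SQS r \<tau>') (\<pi> ` (Pair False ` vecs r))" using eq by simp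
  have "good ((image \<pi>) ` SQS r \<tau>) (\<pi> ` (Pair False ` vecs r)) (positions r)"
    using good_image[OF bij tauloc.good_A[OF t1]] .
  then have "good (SQS r \<tau>') (\<pi> ` (Pair False ` vecs r)) (positions r)" using eq by simp
  then have "inS r \<tau>' (\<pi> ` z)" using tauloc.Phi_in_S[OF t2 _ m] by blast
  then show "w \<in> S_code r \<tau>'" using w S_code_iff[OF bt2] by blast
qed

theorem theorem2:
  fixes r :: nat and \<tau> \<tau>' :: "nat set \<Rightarrow> nat set" and \<pi> :: "bool \<times> nat set \<Rightarrow> bool \<times> nat set"
  assumes "r \<ge> 1"
    and "bij_betw \<tau> (vecs r) (vecs r)" and "\<tau> {} = {}"
    and "bij_betw \<tau>' (vecs r) (vecs r)" and "\<tau>' {} = {}"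
    and "bij_betw \<pi> (positions r) (positions r)"
  shows "(image \<pi>) ` SQS r \<tau> = SQS r \<tau>' \<longleftrightarrow> (image \<pi>) ` S_code r \<tau> = S_code r \<tau>'"
proof -
  have t1: "tauloc r \<tau>" and t2: "tauloc r \<tau>'" using assms by (auto simp: tauloc_def)
  have bij: "bij_betw \<pi> (positions r) (positions r)" by fact
  have inj: "inj_on \<pi> (positions r)" and im: "\<pi> ` positions r = positions r" using bij by (auto simp: bij_betw_def)
  define \<psi> where "\<psi> = inv_into (positions r) \<pi>"
  have bijpsi: "bij_betw \<psi> (positions r) (positions r)" unfolding \<psi>_def by (rule bij_betw_inv_into[OF bij])
  have psipi: "\<psi> ` (\<pi> ` X) = X" if "X \<subseteq> positions r" for X
    unfolding \<psi>_def using inj that by simp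
  have pipsi: "\<pi> ` (\<psi> ` X) = X" if "X \<subseteq> positions r" for X
    unfolding \<psi>_def using image_inv_into_cancel[OF im that] .
  have SP: "X \<subseteq> positions r" if "X \<in> S_code r \<tau>" for X
    using that S_code_iff[OF assms(2)] by (auto simp: inS_def)
  have SP': "X \<subseteq> positions r" if "X \<in> S_code r \<tau>'" for X
    using that S_code_iff[OF assms(4)] by (auto simp: inS_def)
  have DP: "X \<subseteq> positions r" if "X \<in> SQS r \<tau>" for X
    using that tauloc.D_props[OF t1] by blast
  have DP': "X \<subseteq> positions r" if "X \<in> SQS r \<tau>'" for X
    using that tauloc.D_props[OF t2] by blast
  show ?thesis
  proof
    assume eq: "(image \<pi>) ` SQS r \<tau> = SQS r \<tau>'"
    have i1: "(image \<pi>) ` S_code r \<tau> \<subseteq> S_code r \<tau>'" using incl[OF t1 t2 bij eq] .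
    have eq2: "(image \<psi>) ` SQS r \<tau>' = SQS r \<tau>"
    proof -
      have "(image \<psi>) ` SQS r \<tau>' = (image \<psi>) ` ((image \<pi>) ` SQS r \<tau>)" using eq by simp
      also have "\<dots> = (\<lambda>X. \<psi> ` (\<pi> ` X)) ` SQS r \<tau>" by (simp add: image_image)
      also have "\<dots> = SQS r \<tau>" using psipi DP by (simp cong: image_cong)
      finally show ?thesis .
    qed
    have i2: "(image \<psi>) ` S_code r \<tau>' \<subseteq> S_code r \<tau>" using incl[OF t2 t1 bijpsi eq2] .
    have "S_code r \<tau>' \<subseteq> (image \<pi>) ` S_code r \<tau>"
    proof
      fix w assume w: "w \<in> S_code r \<tau>'"
      then have "\<psi> ` w \<in> S_code r \<tau>" using i2 by blast
      moreover have "\<pi> ` (\<psi> ` w) = w" using pipsi SP' w by blast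
      ultimately show "w \<in> (image \<pi>) ` S_code r \<tau>" by (metis image_eqI)
    qed
    then show "(image \<pi>) ` S_code r \<tau> = S_code r \<tau>'" using i1 by blast
  next
    assume eq: "(image \<pi>) ` S_code r \<tau> = S_code r \<tau>'"
    have cardim: "card (\<pi> ` X) = card X" if "X \<subseteq> positions r" for X
      using inj that by (meson card_image inj_on_subset)
    have D1: "SQS r \<tau> = {z \<in> S_code r \<tau>. card z = 4}"
      using tauloc.SQS_iff[OF t1] S_code_iff[OF assms(2)] by blast
    have D2: "SQS r \<tau>' = {z \<in> S_code r \<tau>'. card z = 4}"
      using tauloc.SQS_iff[OF t2] S_code_iff[OF assms(4)] by blast
    show "(image \<pi>) ` SQS r \<tau> = SQS r \<tau>'"
    proof
      show "(image \<pi>) ` SQS r \<tau> \<subseteq> SQS r \<tau>'"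
      proof
        fix w assume "w \<in> (image \<pi>) ` SQS r \<tau>"
        then obtain z where z: "z \<in> SQS r \<tau>" and w: "w = \<pi> ` z" by blast
        have "z \<in> S_code r \<tau>" "card z = 4" using z D1 by auto
        then have "w \<in> S_code r \<tau>'" "card w = 4" using eq w cardim[OF DP[OF z]] by auto
        then show "w \<in> SQS r \<tau>'" using D2 by blast
      qed
    next
      show "SQS r \<tau>' \<subseteq> (image \<pi>) ` SQS r \<tau>"
      proof
        fix w assume w: "w \<in> SQS r \<tau>'"
        then have "w \<in> S_code r \<tau>'" "card w = 4" using D2 by auto
        then obtain z where z: "z \<in> S_code r \<tau>" and wz: "w = \<pi> ` z" using eq by blast
        have "card z = 4" using \<open>card w = 4\<close> wz cardim[OF SP[OF z]] by simp
        then have "z \<in> SQS r \<tau>" using z D1 by blast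
        then show "w \<in> (image \<pi>) ` SQS r \<tau>" using wz by blast
      qed
    qed
  qed
qed

end
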